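(* Let $S$ be a linear relation in $\mathfrak H$ with numerical range $\mathcal W(S)=\{0\}$ (equivalently, $(\varphi',\varphi)=0$ for all $\{\varphi,\varphi'\}\in S$, i.e. $\mathrm{dom}\,S\perp\mathrm{ran}\,S$). Then $S$ is nonnegative, its Friedrichs extension is $S_{\rm F}=\overline{\mathrm{dom}}\,S\times\mathrm{mul}\,S^*$, and its Kreĭn type extension at $0$ is $S_{{\rm K},0}=\ker S^*\times\overline{\mathrm{ran}}\,S$.
   Context: Linear relations in $\mathfrak H$ are linear subspaces of $\mathfrak H\times\mathfrak H$; $\mathrm{dom},\mathrm{ran},\ker T=\{f:\{f,0\}\in T\},\mathrm{mul}\,T=\{g:\{0,g\}\in T\}$; $T^*$ adjoint, $T^{**}$ closure, products $RT=\{\{f,h\}:\exists g,\{f,g\}\in T,\{g,h\}\in R\}$. Numerical range $\mathcal W(S)=\{(\varphi',\varphi):\{\varphi,\varphi'\}\in S,\|\varphi\|=1\}$ (and $\{0\}$ if $\mathrm{dom}\,S=\{0\}$). For a nonnegative relation $S$, $\mathfrak t(S)[\varphi,\psi]=(\varphi',\psi)$ on $\mathrm{dom}\,S$; a representing map for $\mathfrak t(S)$ (with $c=0$) is a linear operator $Q$ into a Hilbert space with $\mathrm{dom}\,Q=\mathrm{dom}\,S$ and $\mathfrak t(S)[\varphi,\psi]=(Q\varphi,Q\psi)$; companion relation $J=\{\{Q\varphi,\varphi'\}:\{\varphi,\varphi'\}\in S\}$. Friedrichs extension $S_{\rm F}=Q^*Q^{**}$ and Kreĭn type extension $S_{{\rm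 K},0}=J^{**}J^*$ (both independent of the choice of $Q$). *)

theory Defs
  imports "HOL-Analysis.Analysis"
begin

class complex_vector = real_vector +
  fixes scaleC :: "complex \<Rightarrow> 'a \<Rightarrow> 'a" (infixr \<open>*\<^sub>C\<close> 75)
  assumes scaleC_add_right: "a *\<^sub>C (x + y) = a *\<^sub>C x + a *\<^sub>C y"
    and scaleC_add_left: "(a + b) *\<^sub>C x = a *\<^sub>C x + b *\<^sub>C x"
    and scaleC_scaleC: "a *\<^sub>C (b *\<^sub>C x) = (a * b) *\<^sub>C x"
    and scaleC_one: "1 *\<^sub>C x = x"
    and scaleR_scaleC: "r *\<^sub>R x = complex_of_real r *\<^sub>C x"

class complex_inner = complex_vector + real_normed_vector +
  fixes cinner :: "'a \<Rightarrow> 'a \<Rightarrow> complex"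
  assumes cinner_commute: "cinner x y = cnj (cinner y x)"
    and cinner_add_left: "cinner (x + y) z = cinner x z + cinner y z"
    and cinner_scaleC_left: "cinner (a *\<^sub>C x) y = a * cinner x y"
    and cinner_self_real: "Im (cinner x x) = 0"
    and cinner_self_nonneg: "0 \<le> Re (cinner x x)"
    and cinner_self_eq_zero: "cinner x x = 0 \<longleftrightarrow> x = 0"
    and norm_eq_sqrt_cinner: "norm x = sqrt (Re (cinner x x))"

class chilbert_space = complex_inner + complete_space


text \<open>Sanity check: the classes are inhabited (\<open>\<complex>\<close> is a complex Hilbert space).\<close>
instantiation complex :: chilbert_space
begin
definition scaleC_complex :: "complex \<Rightarrow> complex \<Rightarrow> complex" where "scaleC_complex a x = a * x"
definition cinner_complex :: "complex \<Rightarrow> complex \<Rightarrow> complex" where "cinner_complex x y = x * cnj y"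
instance
proof
  fix x y z :: complex and a b :: complex and r :: real
  show "a *\<^sub>C (x + y) = a *\<^sub>C x + a *\<^sub>C y" "(a + b) *\<^sub>C x = a *\<^sub>C x + b *\<^sub>C x"
    "a *\<^sub>C (b *\<^sub>C x) = (a * b) *\<^sub>C x" "1 *\<^sub>C x = x" "r *\<^sub>R x = complex_of_real r *\<^sub>C x"
    by (simp_all add: scaleC_complex_def algebra_simps scaleR_conv_of_real)
  show "cinner x y = cnj (cinner y x)" "cinner (x + y) z = cinner x z + cinner y z"
    "cinner (a *\<^sub>C x) y = a * cinner x y" "Im (cinner x x) = 0"
    by (simp_all add: cinner_complex_def scaleC_complex_def algebra_simps)
  show "0 \<le> Re (cinner x x)"
    by (simp add: cinner_complex_def complex_mult_cnj)
  show "cinner x x = 0 \<longleftrightarrow> x = 0"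
    by (simp add: cinner_complex_def)
  show "norm x = sqrt (Re (cinner x x))"
    by (simp add: cinner_complex_def complex_mult_cnj cmod_def power2_eq_square)
qed
end

definition linear_rel :: "('a::complex_vector \<times> 'b::complex_vector) set \<Rightarrow> bool" where
  "linear_rel T \<longleftrightarrow> (0, 0) \<in> T \<and>
     (\<forall>f g f' g'. (f, g) \<in> T \<longrightarrow> (f', g') \<in> T \<longrightarrow> (f + f', g + g') \<in> T) \<and>
     (\<forall>c f g. (f, g) \<in> T \<longrightarrow> (c *\<^sub>C f, c *\<^sub>C g) \<in> T)"

definition rdom :: "('a \<times> 'b) set \<Rightarrow> 'a set" where
  "rdom T = {f. \<exists>g. (f, g) \<in> T}"

definition rran :: "('a \<times> 'b) set \<Rightarrow> 'b set" where
  "rran T = {g. \<exists>f. (f, g) \<in> T}"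

definition rker :: "('a \<times> 'b::zero) set \<Rightarrow> 'a set" where
  "rker T = {f. (f, 0) \<in> T}"

definition rmul :: "('a::zero \<times> 'b) set \<Rightarrow> 'b set" where
  "rmul T = {g. (0, g) \<in> T}"

definition radj :: "('a::complex_inner \<times> 'b::complex_inner) set \<Rightarrow> ('b \<times> 'a) set" where
  "radj T = {(h, k). \<forall>f g. (f, g) \<in> T \<longrightarrow> cinner g h = cinner f k}"

text \<open>Product \<open>R T\<close>: first \<open>T\<close>, then \<open>R\<close>.\<close>
definition rprod :: "('b \<times> 'c) set \<Rightarrow> ('a \<times> 'b) set \<Rightarrow> ('a \<times> 'c) set" where
  "rprod R T = {(f, h). \<exists>g. (f, g) \<in> T \<and> (g, h) \<in> R}"

definition numrange :: "('a::complex_inner \<times> 'a) set \<Rightarrow> complex set" where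
  "numrange S = (if rdom S = {0} then {0}
     else {cinner \<phi>' \<phi> | \<phi> \<phi>'. (\<phi>, \<phi>') \<in> S \<and> norm \<phi> = 1})"

definition nonneg_rel :: "('a::complex_inner \<times> 'a) set \<Rightarrow> bool" where
  "nonneg_rel S \<longleftrightarrow> (\<forall>\<phi> \<phi>'. (\<phi>, \<phi>') \<in> S \<longrightarrow> Im (cinner \<phi>' \<phi>) = 0 \<and> 0 \<le> Re (cinner \<phi>' \<phi>))"

definition tform :: "('a::complex_inner \<times> 'a) set \<Rightarrow> 'a \<Rightarrow> 'a \<Rightarrow> complex" where
  "tform S \<phi> \<psi> = cinner (SOME \<phi>'. (\<phi>, \<phi>') \<in> S) \<psi>"

text \<open>Representing map (lower bound \<open>c = 0\<close>): a linear operator \<open>Q\<close> with domain \<open>dom S\<close>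
  into a Hilbert space, given by a function on \<open>dom S\<close>; its graph is \<open>op_graph S Q\<close>.\<close>
definition op_graph :: "('a \<times> 'a) set \<Rightarrow> ('a \<Rightarrow> 'b) \<Rightarrow> ('a \<times> 'b) set" where
  "op_graph S Q = {(\<phi>, Q \<phi>) | \<phi>. \<phi> \<in> rdom S}"

definition representing_map :: "('a::complex_inner \<times> 'a) set \<Rightarrow> ('a \<Rightarrow> 'b::complex_inner) \<Rightarrow> bool" where
  "representing_map S Q \<longleftrightarrow> linear_rel (op_graph S Q) \<and>
     (\<forall>\<phi> \<psi>. \<phi> \<in> rdom S \<longrightarrow> \<psi> \<in> rdom S \<longrightarrow> tform S \<phi> \<psi> = cinner (Q \<phi>) (Q \<psi>))"

definition companion :: "('a \<times> 'a) set \<Rightarrow> ('a \<Rightarrow> 'b) \<Rightarrow> ('b \<times> 'a) set" where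
  "companion S Q = {(Q \<phi>, \<phi>') | \<phi> \<phi>'. (\<phi>, \<phi>') \<in> S}"

definition friedrichs_ext :: "('a::complex_inner \<times> 'a) set \<Rightarrow> ('a \<Rightarrow> 'b::complex_inner) \<Rightarrow> ('a \<times> 'a) set" where
  "friedrichs_ext S Q = rprod (radj (op_graph S Q)) (radj (radj (op_graph S Q)))"

definition krein_ext0 :: "('a::complex_inner \<times> 'a) set \<Rightarrow> ('a \<Rightarrow> 'b::complex_inner) \<Rightarrow> ('a \<times> 'a) set" where
  "krein_ext0 S Q = rprod (radj (radj (companion S Q))) (radj (companion S Q))"

end

theory Submission
  imports Defs
begin

lemma cinner_zero_left[simp]: "cinner 0 y = 0"
  using cinner_add_left[of 0 0 y] by simp
lemma cinner_zero_right[simp]: "cinner x 0 = 0"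
  by (metis cinner_commute cinner_zero_left complex_cnj_zero)
lemma cinner_add_right: "cinner x (y + z) = cinner x y + cinner x z"
  by (metis cinner_add_left cinner_commute complex_cnj_add)
lemma cinner_scaleC_right: "cinner x (a *\<^sub>C y) = cnj a * cinner x y"
  by (metis cinner_commute cinner_scaleC_left complex_cnj_mult)
lemma scaleC_minus1: "(-1::complex) *\<^sub>C x = - x"
  by (metis of_real_1 of_real_minus scaleR_minus1_left scaleR_scaleC)
lemma cinner_minus_left: "cinner (- x) y = - cinner x y"
  by (metis cinner_scaleC_left mult_minus1 scaleC_minus1)
lemma cinner_minus_right: "cinner x (- y) = - cinner x y"
  by (metis cinner_commute cinner_minus_left complex_cnj_minus)
lemma cinner_diff_left: "cinner (x - y) z = cinner x z - cinner y z"
  unfolding diff_conv_add_uminus cinner_add_left cinner_minus_left by simp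
lemma cinner_diff_right: "cinner x (y - z) = cinner x y - cinner x z"
  unfolding diff_conv_add_uminus cinner_add_right cinner_minus_right by simp
lemma cinner_scaleR_left: "cinner (r *\<^sub>R x) y = of_real r * cinner x y"
  by (simp add: scaleR_scaleC cinner_scaleC_left)
lemma cinner_scaleR_right: "cinner x (r *\<^sub>R y) = of_real r * cinner x y"
  by (simp add: scaleR_scaleC cinner_scaleC_right)
lemma norm_sq: "(norm x)^2 = Re (cinner x x)"
  using norm_eq_sqrt_cinner[of x] cinner_self_nonneg[of x] by simp
lemma Re_cinner_sym: "Re (cinner y x) = Re (cinner x y)"
  by (subst cinner_commute) simp
lemma nsq_add: "(norm (x+y))^2 = (norm x)^2 + (norm y)^2 + 2 * Re (cinner x y)"
proof -
  have "Re (cinner (x+y) (x+y)) = Re (cinner x x) + Re (cinner y y) + Re (cinner x y) + Re (cinner y x)"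
    unfolding cinner_add_left cinner_add_right by simp
  thus ?thesis unfolding norm_sq Re_cinner_sym[of y x] by simp
qed
lemma nsq_diff: "(norm (x-y))^2 = (norm x)^2 + (norm y)^2 - 2 * Re (cinner x y)"
proof -
  have "Re (cinner (x-y) (x-y)) = Re (cinner x x) + Re (cinner y y) - Re (cinner x y) - Re (cinner y x)"
    unfolding cinner_diff_left cinner_diff_right by simp
  thus ?thesis unfolding norm_sq Re_cinner_sym[of y x] by simp
qed
lemma polar_Re: "Re (cinner a z) = ((norm (a+z))^2 - (norm (a-z))^2) / 4"
  unfolding nsq_add nsq_diff by simp
lemma polar_Im: "Im (cinner a z) = Re (cinner a (\<i> *\<^sub>C z))"
  by (simp add: cinner_scaleC_right)

lemma closed_perp: "closed {a. cinner a z = 0}"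
proof -
  define A where "A = {a. ((norm (a+z))^2 - (norm (a-z))^2) = (0::real)}"
  define B where "B = {a. ((norm (a+\<i> *\<^sub>C z))^2 - (norm (a-\<i> *\<^sub>C z))^2) = (0::real)}"
  have "{a. cinner a z = 0} = A \<inter> B"
  proof (rule set_eqI)
    fix a
    have "cinner a z = 0 \<longleftrightarrow> Re (cinner a z) = 0 \<and> Im (cinner a z) = 0"
      using complex_eq_iff by auto
    also have "\<dots> \<longleftrightarrow> ((norm (a+z))^2 - (norm (a-z))^2) = 0 \<and>
       ((norm (a+\<i> *\<^sub>C z))^2 - (norm (a-\<i> *\<^sub>C z))^2) = 0"
      unfolding polar_Im polar_Re[of a z] polar_Re[of a "\<i> *\<^sub>C z"] by simp
    finally show "a \<in> {a. cinner a z = 0} \<longleftrightarrow> a \<in> A \<inter> B" unfolding A_def B_def by simp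
  qed
  moreover have "closed A" unfolding A_def
    by (intro closed_Collect_eq continuous_intros)
  moreover have "closed B" unfolding B_def
    by (intro closed_Collect_eq continuous_intros)
  ultimately show ?thesis by auto
qed

lemma closure_perp:
  assumes "\<forall>y\<in>D. cinner y k = 0" "f \<in> closure D"
  shows "cinner f k = 0"
proof -
  have "closure D \<subseteq> {a. cinner a k = 0}"
    using assms(1) by (intro closure_minimal closed_perp) auto
  thus ?thesis using assms(2) by auto
qed


lemma perp_perp_closure:
  fixes D :: "'a::chilbert_space set"
  assumes D0: "0 \<in> D" and Dadd: "\<And>a b. a\<in>D \<Longrightarrow> b\<in>D \<Longrightarrow> a+b \<in> D"
    and Dsc: "\<And>c a. a\<in>D \<Longrightarrow> c *\<^sub>C a \<in> D"
    and hx: "\<And>k. \<forall>y\<in>D. cinner y k = 0 \<Longrightarrow> cinner k x = 0"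
  shows "x \<in> closure D"
proof -
  define d where "d = infdist x D"
  have d0: "0 \<le> d" by (simp add: d_def infdist_nonneg)
  have dle: "\<And>a. a\<in>D \<Longrightarrow> d \<le> norm (x - a)" using infdist_le dist_norm d_def by metis
  have dle2: "\<And>a. a\<in>D \<Longrightarrow> d^2 \<le> (norm (x - a))^2" using dle d0 by (simp add: power_mono)
  have DR: "\<And>r a. a\<in>D \<Longrightarrow> r *\<^sub>R a \<in> D" by (simp add: scaleR_scaleC Dsc)
  have ex: "\<exists>a\<in>D. (norm (x-a))^2 < d^2 + inverse (real (Suc n))" for n
  proof -
    have "d = sqrt (d^2)" using d0 by simp
    also have "\<dots> < sqrt (d^2 + inverse (real (Suc n)))" by (intro real_sqrt_less_mono) (simp del: of_nat_Suc)
    finally have dl: "d < sqrt (d^2 + inverse (real (Suc n)))" .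
    have deq: "d = (INF a\<in>D. dist x a)" using D0 infdist_notempty[of D x] d_def by auto
    have "(INF a\<in>D. dist x a) < sqrt (d^2 + inverse (real (Suc n)))"
      using dl by (simp only: deq[symmetric])
    then obtain a where a: "a\<in>D" "dist x a < sqrt (d^2 + inverse (real (Suc n)))"
      using cINF_less_iff[of D "dist x"] D0 by auto
    have "(dist x a)^2 < (sqrt (d^2 + inverse (real (Suc n))))^2"
      using a(2) by (intro power_strict_mono) auto
    also have "\<dots> = d^2 + inverse (real (Suc n))" by (simp del: of_nat_Suc)
    finally show ?thesis using a(1) by (auto simp: dist_norm)
  qed
  then obtain m where mD: "\<And>n. m n \<in> D"
    and mb: "\<And>n. (norm (x - m n))^2 < d^2 + inverse (real (Suc n))" by metis
  have bnd: "(norm (m n - m k))^2 \<le> 2 * inverse (real (Suc n)) + 2 * inverse (real (Suc k))" for n k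
  proof -
    define a where "a = x - m n"
    define b where "b = x - m k"
    define mid where "mid = (1/2::real) *\<^sub>R (m n + m k)"
    have midD: "mid \<in> D" unfolding mid_def using mD by (intro DR Dadd)
    have ab: "a + b = 2 *\<^sub>R (x - mid)" unfolding a_def b_def mid_def by (simp add: algebra_simps scaleR_2)
    have "(norm (a+b))^2 = 4 * (norm (x - mid))^2" unfolding ab by (simp add: power_mult_distrib)
    hence h1: "4 * d^2 \<le> (norm (a+b))^2" using dle2[OF midD] by simp
    have par: "(norm (a+b))^2 + (norm (a-b))^2 = 2*(norm a)^2 + 2*(norm b)^2"
      unfolding nsq_add nsq_diff by simp
    have "a - b = m k - m n" unfolding a_def b_def by simp
    hence "(norm (a - b))^2 = (norm (m n - m k))^2" by (simp add: norm_minus_commute)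
    thus ?thesis using par h1 mb[of n] mb[of k] unfolding a_def[symmetric] b_def[symmetric] by linarith
  qed
  have "Cauchy m"
  proof (rule CauchyI)
    fix e :: real assume e: "0 < e"
    then obtain N where N: "N > 0" "inverse (real N) < e^2/4"
      using ex_inverse_of_nat_less[of "e^2/4"] by auto
    have "norm (m p - m q) < e" if "p \<ge> N" "q \<ge> N" for p q
    proof -
      have "inverse (real (Suc p)) \<le> inverse (real N)" "inverse (real (Suc q)) \<le> inverse (real N)"
        using that N(1) by (auto simp: field_simps)
      hence "(norm (m p - m q))^2 < e^2" using bnd[of p q] N(2) by linarith
      thus ?thesis using e power_less_imp_less_base less_imp_le by metis
    qed
    thus "\<exists>M. \<forall>p\<ge>M. \<forall>q\<ge>M. norm (m p - m q) < e" by blast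
  qed
  then obtain l where ml: "m \<longlonglongrightarrow> l" using Cauchy_convergent_iff convergent_def by blast
  have lD: "l \<in> closure D" using closure_sequential mD ml by blast
  define z where "z = x - l"
  have i: "(norm z)^2 \<le> d^2"
  proof (rule LIMSEQ_le)
    show "(\<lambda>n. (norm (x - m n))^2) \<longlonglongrightarrow> (norm z)^2" unfolding z_def
      by (intro tendsto_intros ml)
    show "(\<lambda>n. d^2 + inverse (real (Suc n))) \<longlonglongrightarrow> d^2"
      using tendsto_add[OF tendsto_const LIMSEQ_inverse_real_of_nat, of "d^2"] by simp
    show "\<exists>N. \<forall>n\<ge>N. (norm (x - m n))^2 \<le> d^2 + inverse (real (Suc n))"
      using mb less_imp_le by blast
  qed
  have ii: "d^2 \<le> (norm (z - t *\<^sub>C y))^2" if yD: "y \<in> D" for y t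
  proof -
    have "d \<le> norm (z - t *\<^sub>C y)"
    proof (rule LIMSEQ_le_const)
      show "(\<lambda>n. norm (x - (m n + t *\<^sub>C y))) \<longlonglongrightarrow> norm (z - t *\<^sub>C y)"
      proof -
        have "(\<lambda>n. norm (x - (m n + t *\<^sub>C y))) \<longlonglongrightarrow> norm (x - (l + t *\<^sub>C y))"
          by (intro tendsto_intros ml)
        moreover have "x - (l + t *\<^sub>C y) = z - t *\<^sub>C y" unfolding z_def by (simp add: algebra_simps)
        ultimately show ?thesis by simp
      qed
      show "\<exists>N. \<forall>n\<ge>N. d \<le> norm (x - (m n + t *\<^sub>C y))"
        using dle Dadd mD Dsc yD by blast
    qed
    thus ?thesis using d0 by (simp add: power_mono)
  qed
  have iii: "cinner z y = 0" if yD: "y \<in> D" for y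
  proof -
    define c where "c = cinner z y"
    define N where "N = (norm y)^2"
    define C where "C = (cmod c)^2"
    define s where "s = 1 / (N + 1)"
    define t where "t = complex_of_real s * c"
    have N0: "0 \<le> N" "0 \<le> C" unfolding N_def C_def by auto
    have s0: "0 < s" unfolding s_def using N0 by simp
    have "(norm (z - t *\<^sub>C y))^2 = (norm z)^2 + (norm (t *\<^sub>C y))^2 - 2 * Re (cinner z (t *\<^sub>C y))"
      by (rule nsq_diff)
    moreover have "Re (cinner z (t *\<^sub>C y)) = s * C"
    proof -
      have "cinner z (t *\<^sub>C y) = complex_of_real s * (c * cnj c)"
        unfolding cinner_scaleC_right t_def c_def by simp
      also have "\<dots> = complex_of_real (s * C)" unfolding C_def complex_norm_square[symmetric] by simp
      finally show ?thesis by simp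
    qed
    moreover have "(norm (t *\<^sub>C y))^2 = s^2 * C * N"
    proof -
      have "cinner (t *\<^sub>C y) (t *\<^sub>C y) = (t * cnj t) * cinner y y"
        unfolding cinner_scaleC_right cinner_scaleC_left by (simp add: algebra_simps)
      also have "t * cnj t = complex_of_real (s^2 * C)"
        unfolding t_def C_def complex_norm_square[symmetric] using s0 by (simp add: power_mult_distrib norm_mult)
      finally show ?thesis unfolding norm_sq N_def by simp
    qed
    ultimately have "0 \<le> s^2 * C * N - 2 * s * C" using i ii[OF yD, of t] by simp
    hence "0 \<le> s * C * (s * N - 2)" by (simp add: algebra_simps power2_eq_square)
    hence "0 \<le> s * (C * (s * N - 2))" by (simp add: mult.assoc)
    hence "0 \<le> C * (s * N - 2)" using s0 zero_le_mult_iff by (metis not_less)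
    moreover have "s * N < 1" unfolding s_def using N0 by (simp add: field_simps)
    ultimately have "C \<le> 0" using zero_le_mult_iff[of C "s*N-2"] by linarith
    hence "cmod c = 0" unfolding C_def by simp
    thus ?thesis unfolding c_def by simp
  qed
  have zperp: "\<forall>y\<in>D. cinner y z = 0"
    using iii by (metis cinner_commute complex_cnj_zero)
  have "cinner z x = 0" using hx[OF zperp] .
  moreover have "cinner l z = 0" using closure_perp[OF zperp lD] .
  hence "cinner z l = 0" by (metis cinner_commute complex_cnj_zero)
  moreover have "cinner z z = cinner z x - cinner z l" unfolding z_def[symmetric] using cinner_diff_right z_def by metis
  ultimately have "cinner z z = 0" by simp
  hence "z = 0" using cinner_self_eq_zero by blast
  thus ?thesis using lD unfolding z_def by simp
qed


theorem lemma8p2: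
  fixes S :: "('a::chilbert_space \<times> 'a) set" and Q :: "'a \<Rightarrow> 'b::chilbert_space"
  assumes "linear_rel S" and "numrange S = {0}"
  shows "nonneg_rel S \<and>
    (representing_map S Q \<longrightarrow>
       friedrichs_ext S Q = closure (rdom S) \<times> rmul (radj S) \<and>
       krein_ext0 S Q = rker (radj S) \<times> closure (rran S))"
proof -
  have S0: "(0,0) \<in> S" using assms(1) unfolding linear_rel_def by blast
  have Sadd: "\<And>f g f' g'. (f, g) \<in> S \<Longrightarrow> (f', g') \<in> S \<Longrightarrow> (f + f', g + g') \<in> S"
    using assms(1) unfolding linear_rel_def by blast
  have Ssc: "\<And>c f g. (f, g) \<in> S \<Longrightarrow> (c *\<^sub>C f, c *\<^sub>C g) \<in> S"
    using assms(1) unfolding linear_rel_def by blast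
  have hA: "cinner \<phi>' \<phi> = 0" if P: "(\<phi>, \<phi>') \<in> S" for \<phi> \<phi>'
  proof (cases "\<phi> = 0")
    case True thus ?thesis by simp
  next
    case False
    have "\<phi> \<in> rdom S" using P unfolding rdom_def by blast
    hence "rdom S \<noteq> {0}" using False by blast
    hence NR: "{cinner \<phi>' \<phi> | \<phi> \<phi>'. (\<phi>, \<phi>') \<in> S \<and> norm \<phi> = 1} = {0}"
      using assms(2) unfolding numrange_def by simp
    define r where "r = 1 / norm \<phi>"
    have r0: "r \<noteq> 0" unfolding r_def using False by simp
    have "(r *\<^sub>R \<phi>, r *\<^sub>R \<phi>') \<in> S" unfolding scaleR_scaleC using Ssc P by blast
    moreover have "norm (r *\<^sub>R \<phi>) = 1" unfolding r_def using False by simp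
    ultimately have "cinner (r *\<^sub>R \<phi>') (r *\<^sub>R \<phi>) \<in> {0}" using NR by blast
    hence "of_real r * (of_real r * cinner \<phi>' \<phi>) = 0"
      unfolding cinner_scaleR_left cinner_scaleR_right by simp
    thus ?thesis using r0 by simp
  qed
  have hB: "cinner \<phi>' \<psi> = 0" if P1: "(\<phi>, \<phi>') \<in> S" and P2: "(\<psi>, \<psi>') \<in> S" for \<phi> \<phi>' \<psi> \<psi>'
  proof -
    define a where "a = cinner \<phi>' \<psi>"
    define b where "b = cinner \<psi>' \<phi>"
    have "cinner (\<phi>' + \<psi>') (\<phi> + \<psi>) = 0" using hA Sadd[OF P1 P2] by blast
    hence e1: "a + b = 0" unfolding cinner_add_left cinner_add_right a_def b_def
      using hA[OF P1] hA[OF P2] by (simp add: add.commute)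
    have "(\<phi> + \<i> *\<^sub>C \<psi>, \<phi>' + \<i> *\<^sub>C \<psi>') \<in> S" using Sadd[OF P1 Ssc[OF P2]] .
    hence "cinner (\<phi>' + \<i> *\<^sub>C \<psi>') (\<phi> + \<i> *\<^sub>C \<psi>) = 0" using hA by blast
    hence "- \<i> * a + \<i> * b = 0"
      unfolding cinner_add_left cinner_add_right cinner_scaleC_left cinner_scaleC_right a_def b_def
      using hA[OF P1] hA[OF P2] by simp
    hence "b = a" by (simp add: algebra_simps)
    thus ?thesis using e1 a_def by simp
  qed
  have nn: "nonneg_rel S" unfolding nonneg_rel_def using hA by simp
  define D where "D = rdom S"
  define R where "R = rran S"
  have D0: "0 \<in> D" and Dadd: "\<And>a b. a\<in>D \<Longrightarrow> b\<in>D \<Longrightarrow> a+b \<in> D"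
    and Dsc: "\<And>c a. a\<in>D \<Longrightarrow> c *\<^sub>C a \<in> D"
    unfolding D_def rdom_def using S0 Sadd Ssc by blast+
  have R0: "0 \<in> R" and Radd: "\<And>a b. a\<in>R \<Longrightarrow> b\<in>R \<Longrightarrow> a+b \<in> R"
    and Rsc: "\<And>c a. a\<in>R \<Longrightarrow> c *\<^sub>C a \<in> R"
    unfolding R_def rran_def using S0 Sadd Ssc by blast+
  define pD where "pD = {k. \<forall>y\<in>D. cinner y k = 0}"
  define pR where "pR = {k. \<forall>y\<in>R. cinner y k = 0}"
  have rmulS: "rmul (radj S) = pD"
    unfolding rmul_def radj_def pD_def D_def rdom_def by auto
  have rkerS: "rker (radj S) = pR"
    unfolding rker_def radj_def pR_def R_def rran_def by auto
  have cc: "cinner k f = 0" if "\<forall>y\<in>A. cinner y k = 0" "f \<in> closure A" for A k f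
    using closure_perp[OF that] by (metis cinner_commute complex_cnj_zero)
  have main: "representing_map S Q \<longrightarrow>
       friedrichs_ext S Q = closure (rdom S) \<times> rmul (radj S) \<and>
       krein_ext0 S Q = rker (radj S) \<times> closure (rran S)"
  proof
    assume rep: "representing_map S Q"
    have Q0: "Q \<phi> = 0" if "\<phi> \<in> rdom S" for \<phi>
    proof -
      have ex: "\<exists>\<phi>'. (\<phi>, \<phi>') \<in> S" using that unfolding rdom_def by blast
      have "tform S \<phi> \<phi> = 0" unfolding tform_def using hA someI_ex[OF ex] by blast
      hence "cinner (Q \<phi>) (Q \<phi>) = 0" using rep that unfolding representing_map_def by metis
      thus ?thesis using cinner_self_eq_zero by blast
    qed
    have opg: "op_graph S Q = D \<times> {0}"
      unfolding op_graph_def D_def using Q0 by auto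
    have comp: "companion S Q = {0::'b} \<times> R"
    proof
      show "companion S Q \<subseteq> {0} \<times> R"
        unfolding companion_def R_def rran_def using Q0 unfolding rdom_def by blast
      show "{0} \<times> R \<subseteq> companion S Q"
      proof
        fix p :: "'b \<times> 'a" assume "p \<in> {0} \<times> R"
        then obtain f g where fg: "(f, g) \<in> S" "p = (0, g)" unfolding R_def rran_def by blast
        have "Q f = 0" using Q0 fg(1) unfolding rdom_def by blast
        thus "p \<in> companion S Q" unfolding companion_def using fg by force
      qed
    qed
    have a1: "radj (D \<times> {0::'b}) = (UNIV :: 'b set) \<times> pD"
      unfolding radj_def pD_def by auto
    have a2: "radj ((UNIV :: 'b set) \<times> pD) = closure D \<times> {0}"
    proof
      show "radj ((UNIV :: 'b set) \<times> pD) \<subseteq> closure D \<times> {0}"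
      proof
        fix p assume p: "p \<in> radj ((UNIV :: 'b set) \<times> pD)"
        obtain f g where fg: "p = (f, g)" by (cases p)
        have H: "\<And>h k. k \<in> pD \<Longrightarrow> cinner k f = cinner h g" using p fg unfolding radj_def by auto
        have "0 \<in> pD" unfolding pD_def by simp
        hence "cinner g g = 0" using H[of 0 g] by simp
        hence g0: "g = 0" using cinner_self_eq_zero by blast
        have "f \<in> closure D"
          by (rule perp_perp_closure[OF D0 Dadd Dsc]) (use H[of _ 0] pD_def in auto)
        thus "p \<in> closure D \<times> {0}" using fg g0 by simp
      qed
      show "closure D \<times> {0} \<subseteq> radj ((UNIV :: 'b set) \<times> pD)"
        unfolding radj_def using cc unfolding pD_def by auto
    qed
    have F: "friedrichs_ext S Q = closure (rdom S) \<times> rmul (radj S)"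
      unfolding friedrichs_ext_def opg a1 a2 rmulS rprod_def D_def[symmetric] by auto
    have b1: "radj ({0::'b} \<times> R) = pR \<times> (UNIV :: 'b set)"
      unfolding radj_def pR_def by auto
    have b2: "radj (pR \<times> (UNIV :: 'b set)) = {0} \<times> closure R"
    proof
      show "radj (pR \<times> (UNIV :: 'b set)) \<subseteq> {0} \<times> closure R"
      proof
        fix p assume p: "p \<in> radj (pR \<times> (UNIV :: 'b set))"
        obtain f g where fg: "p = (f, g)" by (cases p)
        have H: "\<And>h k. h \<in> pR \<Longrightarrow> cinner k f = cinner h g" using p fg unfolding radj_def by auto
        have "0 \<in> pR" unfolding pR_def by simp
        hence "cinner f f = 0" using H[of 0 f] by simp
        hence f0: "f = 0" using cinner_self_eq_zero by blast
        have "g \<in> closure R"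
          by (rule perp_perp_closure[OF R0 Radd Rsc]) (use H[of _ 0] pR_def in auto)
        thus "p \<in> {0} \<times> closure R" using fg f0 by simp
      qed
      show "{0} \<times> closure R \<subseteq> radj (pR \<times> (UNIV :: 'b set))"
        unfolding radj_def using cc unfolding pR_def by auto
    qed
    have K: "krein_ext0 S Q = rker (radj S) \<times> closure (rran S)"
      unfolding krein_ext0_def comp b1 b2 rkerS rprod_def R_def[symmetric] by auto
    show "friedrichs_ext S Q = closure (rdom S) \<times> rmul (radj S) \<and>
       krein_ext0 S Q = rker (radj S) \<times> closure (rran S)" using F K by blast
  qed
  show ?thesis using nn main by blast
qed

end
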